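(* For any invoking cost $q>0$, every deterministic on-line exploration strategy $\mathcal{S}$ for edge-weighted rings has competitive ratio at least $\frac{3}{2}$, i.e., $\sup_{C}\mathcal{S}(C)/\mathcal{S}^{opt}(C)\ge \frac32$, where the supremum is over all edge-weighted rings $C$ with the homebase at a vertex $v_0$.
   Context: Exploration model: a connected undirected graph with positive edge weights $w$ and a designated homebase vertex is given, together with an invoking cost $q\ge 0$. A strategy is a sequence of moves, each either (1) invoking a new agent, which appears at the homebase, or (2) an agent traversing an edge incident to its current vertex. A vertex is explored when first visited; a strategy explores the graph when every vertex has been visited by some agent (agents need not return). If $k$ agents are used and agent $i$ traverses total distance $d_i$ (sum of weights of traversed edges, with multiplicity), the cost is $kq+\sum_i d_i$. A ring is a cycle graph with at least $3$ vertices. In the on-line setting the graph is not known in advance: an agent at vertex $v$ knows the weights of the edges incident to $v$ and whether each neighbour of $v$ has been explored, and agents communicate freely; each move depends only on information revealed so far. $\mathcal{S}(C)$ is the cost of $\mathcal{S}$ on $C$ and $\mathcal{S}^{opt}(C)$ is the minimum cost of an off-line strategy (full knowledge of $C$) exploring $C$. The competitive ratio of $\mathcal{S}$ is $\sup_C \mathcal{S}(C)/\mathcal{S}^{opt}(C)$. *)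

theory Defs
  imports Main "HOL-Library.Extended_Real"
begin

(* A ring with n >= 3 vertices 0..n-1, homebase 0.  w i is the weight of the
   edge {i, (i+1) mod n}.  Direction True = towards (v+1) mod n ("right"),
   False = towards (v+n-1) mod n ("left"). *)

definition is_ring :: "nat \<Rightarrow> (nat \<Rightarrow> real) \<Rightarrow> bool" where
  "is_ring n w \<longleftrightarrow> n \<ge> 3 \<and> (\<forall>i<n. w i > 0)"

datatype move = Invoke | Go nat bool

(* local view of an agent at vertex v: (weight of left edge, weight of right edge,
   left neighbour explored, right neighbour explored) *)
type_synonym lview = "real \<times> real \<times> bool \<times> bool"
type_synonym view = "lview list"
type_synonym strategy = "view list \<Rightarrow> move"   (* on-line: next move from revealed info *)

(* state: agent positions, explored vertices, accumulated cost *)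
type_synonym state = "nat list \<times> nat set \<times> real"

definition left_nb :: "nat \<Rightarrow> nat \<Rightarrow> nat" where
  "left_nb n v = (v + n - 1) mod n"

definition right_nb :: "nat \<Rightarrow> nat \<Rightarrow> nat" where
  "right_nb n v = Suc v mod n"

definition lview_at :: "nat \<Rightarrow> (nat \<Rightarrow> real) \<Rightarrow> nat set \<Rightarrow> nat \<Rightarrow> lview" where
  "lview_at n w E v = (w (left_nb n v), w v, left_nb n v \<in> E, right_nb n v \<in> E)"

definition view_of :: "nat \<Rightarrow> (nat \<Rightarrow> real) \<Rightarrow> state \<Rightarrow> view" where
  "view_of n w st = (case st of (ps, E, c) \<Rightarrow> map (lview_at n w E) ps)"

(* invalid moves (non-existing agent) are no-ops *)
definition step :: "nat \<Rightarrow> (nat \<Rightarrow> real) \<Rightarrow> real \<Rightarrow> move \<Rightarrow> state \<Rightarrow> state" where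
  "step n w q m st = (case st of (ps, E, c) \<Rightarrow>
     (case m of
        Invoke \<Rightarrow> (ps @ [0], insert 0 E, c + q)
      | Go i d \<Rightarrow>
          (if i < length ps then
             (let v = ps ! i;
                  v' = (if d then right_nb n v else left_nb n v);
                  e = (if d then w v else w v')
              in (ps[i := v'], insert v' E, c + e))
           else (ps, E, c))))"

definition init_state :: state where
  "init_state = ([], {}, 0)"

definition explored :: "nat \<Rightarrow> state \<Rightarrow> bool" where
  "explored n st \<longleftrightarrow> {..<n} \<subseteq> fst (snd st)"

definition cost_of :: "state \<Rightarrow> real" where
  "cost_of st = snd (snd st)"

fun exec :: "strategy \<Rightarrow> nat \<Rightarrow> (nat \<Rightarrow> real) \<Rightarrow> real \<Rightarrow> nat \<Rightarrow> state \<times> view list" where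
  "exec S n w q 0 = (init_state, [view_of n w init_state])"
| "exec S n w q (Suc t) =
     (let (st, h) = exec S n w q t;
          st' = step n w q (S h) st
      in (st', h @ [view_of n w st']))"

definition online_explores :: "strategy \<Rightarrow> nat \<Rightarrow> (nat \<Rightarrow> real) \<Rightarrow> real \<Rightarrow> bool" where
  "online_explores S n w q \<longleftrightarrow> (\<exists>t. explored n (fst (exec S n w q t)))"

definition online_cost :: "strategy \<Rightarrow> nat \<Rightarrow> (nat \<Rightarrow> real) \<Rightarrow> real \<Rightarrow> real" where
  "online_cost S n w q =
     cost_of (fst (exec S n w q (LEAST t. explored n (fst (exec S n w q t)))))"

(* off-line: any finite sequence of moves chosen with full knowledge *)
definition run_moves :: "nat \<Rightarrow> (nat \<Rightarrow> real) \<Rightarrow> real \<Rightarrow> move list \<Rightarrow> state" where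
  "run_moves n w q ms = fold (step n w q) ms init_state"

definition opt_cost :: "nat \<Rightarrow> (nat \<Rightarrow> real) \<Rightarrow> real \<Rightarrow> real" where
  "opt_cost n w q = Inf {cost_of (run_moves n w q ms) | ms. explored n (run_moves n w q ms)}"

definition ratio :: "strategy \<Rightarrow> nat \<Rightarrow> (nat \<Rightarrow> real) \<Rightarrow> real \<Rightarrow> ereal" where
  "ratio S n w q = (if online_explores S n w q
                    then ereal (online_cost S n w q / opt_cost n w q) else \<infinity>)"

definition competitive_ratio :: "strategy \<Rightarrow> real \<Rightarrow> ereal" where
  "competitive_ratio S q = (SUP C \<in> {(n, w). is_ring n w}. ratio S (fst C) (snd C) q)"

end

theory Submission
  imports Defs
begin



lemma step_simps:
  "step n w q Invoke (ps,E,c) = (ps@[0], insert 0 E, c+q)"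
  "step n w q (Go i d) (ps,E,c) = (if i < length ps then
      (ps[i := (if d then right_nb n (ps!i) else left_nb n (ps!i))],
       insert (if d then right_nb n (ps!i) else left_nb n (ps!i)) E,
       c + (if d then w (ps!i) else w (left_nb n (ps!i)))) else (ps,E,c))"
  by (auto simp: step_def Let_def)

lemma exec_Suc':
  "exec S n w q (Suc t) = (step n w q (S (snd (exec S n w q t))) (fst (exec S n w q t)),
     snd (exec S n w q t) @ [view_of n w (step n w q (S (snd (exec S n w q t))) (fst (exec S n w q t)))])"
  by (simp add: case_prod_beta Let_def)

lemma right_nb_lt: "n > 0 \<Longrightarrow> right_nb n v < n" by (simp add: right_nb_def)
lemma left_nb_lt: "n > 0 \<Longrightarrow> left_nb n v < n" by (simp add: left_nb_def)
lemma right_left: "n > 0 \<Longrightarrow> v < n \<Longrightarrow> right_nb n (left_nb n v) = v"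
  unfolding right_nb_def left_nb_def
  by (metis Suc_pred' add.commute add_diff_assoc le_add1 mod_Suc_eq mod_add_self2 mod_less less_Suc_eq_0_disj
      Suc_leI add_gr_0 diff_Suc_1)




definition goodst :: "nat \<Rightarrow> state \<Rightarrow> bool" where
  "goodst n st \<longleftrightarrow> (\<forall>p\<in>set (fst st). p < n) \<and> set (fst st) \<subseteq> fst (snd st)"

lemma step_good:
  assumes "n > 0" "goodst n st"
  shows "goodst n (step n w q m st) \<and> fst (snd st) \<subseteq> fst (snd (step n w q m st))"
proof -
  obtain ps E c where st: "st = (ps,E,c)" by (cases st) auto
  show ?thesis
  proof (cases m)
    case Invoke thus ?thesis using assms by (auto simp: st step_simps goodst_def)
  next
    case (Go i d)
    show ?thesis
    proof (cases "i < length ps")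
      case True
      let ?x = "(if d then right_nb n (ps!i) else left_nb n (ps!i))"
      have "set (ps[i := ?x]) \<subseteq> insert ?x (set ps)" by (rule set_update_subset_insert)
      moreover have "?x < n" using assms by (auto simp: right_nb_lt left_nb_lt)
      ultimately show ?thesis using assms True by (auto simp: st step_simps goodst_def Go)
    next
      case False thus ?thesis using assms by (auto simp: st step_simps goodst_def Go)
    qed
  qed
qed

lemma step_cost_mono:
  assumes "n > 0" "goodst n st" "\<forall>i<n. w i \<ge> 0" "q \<ge> 0"
  shows "snd (snd st) \<le> snd (snd (step n w q m st))"
proof -
  obtain ps E c where st: "st = (ps,E,c)" by (cases st) auto
  show ?thesis
  proof (cases m)
    case Invoke thus ?thesis using assms by (auto simp: st step_simps)
  next
    case (Go i d)
    show ?thesis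
    proof (cases "i < length ps")
      case True
      hence "ps!i < n" using assms by (auto simp: st goodst_def)
      moreover have "left_nb n (ps!i) < n" using assms by (simp add: left_nb_lt)
      ultimately show ?thesis using assms True by (auto simp: st step_simps Go)
    next
      case False thus ?thesis using assms by (auto simp: st step_simps Go)
    qed
  qed
qed

abbreviation stt where "stt S n w q t \<equiv> fst (exec S n w q t)"

lemma stt_Suc: "stt S n w q (Suc t) = step n w q (S (snd (exec S n w q t))) (stt S n w q t)"
  by (subst exec_Suc') simp

declare exec.simps(2)[simp del]

lemma exec_good: assumes n: "n > 0" shows "goodst n (stt S n w q t)"
proof (induction t)
  case 0 thus ?case by (simp add: init_state_def goodst_def)
next
  case (Suc t) thus ?case unfolding stt_Suc using step_good[OF n Suc.IH] by blast
qed

lemma exec_E_mono: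
  assumes "n > 0" "t1 \<le> t2"
  shows "fst (snd (stt S n w q t1)) \<subseteq> fst (snd (stt S n w q t2))"
proof -
  have "\<And>t. fst (snd (stt S n w q t)) \<subseteq> fst (snd (stt S n w q (Suc t)))"
    unfolding stt_Suc using step_good[OF assms(1) exec_good[OF assms(1)]] by blast
  from lift_Suc_mono_le[of "\<lambda>t. fst (snd (stt S n w q t))", OF this assms(2)] show ?thesis .
qed

lemma exec_cost_mono:
  assumes "n > 0" "t1 \<le> t2" "\<forall>i<n. w i \<ge> 0" "q \<ge> 0"
  shows "snd (snd (stt S n w q t1)) \<le> snd (snd (stt S n w q t2))"
proof -
  have "\<And>t. snd (snd (stt S n w q t)) \<le> snd (snd (stt S n w q (Suc t)))"
    unfolding stt_Suc using step_cost_mono[OF assms(1) exec_good[OF assms(1)] assms(3,4)] by blast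
  from lift_Suc_mono_le[of "\<lambda>t. snd (snd (stt S n w q t))", OF this assms(2)] show ?thesis .
qed

lemma step_eq:
  assumes "set ps \<subseteq> V" "\<forall>v\<in>V. w1 v = w2 v \<and> w1 (left_nb n v) = w2 (left_nb n v)"
  shows "step n w1 q m (ps,E,c) = step n w2 q m (ps,E,c)"
proof (cases m)
  case Invoke thus ?thesis by (simp add: step_simps)
next
  case (Go i d)
  show ?thesis
  proof (cases "i < length ps")
    case True
    hence "ps!i \<in> V" using assms(1) nth_mem by blast
    thus ?thesis using assms True by (simp add: step_simps Go)
  next
    case False thus ?thesis by (simp add: step_simps Go)
  qed
qed

lemma view_eq:
  assumes "set ps \<subseteq> V" "\<forall>v\<in>V. w1 v = w2 v \<and> w1 (left_nb n v) = w2 (left_nb n v)"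
  shows "view_of n w1 (ps,E,c) = view_of n w2 (ps,E,c)"
  using assms by (auto simp: view_of_def lview_at_def)

lemma indist:
  assumes "\<forall>v\<in>V. w1 v = w2 v \<and> w1 (left_nb n v) = w2 (left_nb n v)"
  shows "(\<forall>s\<le>t. set (fst (stt S n w1 q s)) \<subseteq> V) \<Longrightarrow> exec S n w2 q t = exec S n w1 q t"
proof (induction t)
  case 0
  thus ?case using view_eq[OF _ assms, of "[]"] by (simp add: init_state_def)
next
  case (Suc t)
  hence IH: "exec S n w2 q t = exec S n w1 q t" by auto
  obtain ps E c where st: "stt S n w1 q t = (ps,E,c)" by (cases "stt S n w1 q t") auto
  have P1: "set ps \<subseteq> V" using Suc.prems[rule_format, of t] st by auto
  have eq1: "step n w2 q m (ps,E,c) = step n w1 q m (ps,E,c)" for m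
    using step_eq[OF P1 assms] by simp
  obtain ps' E' c' where st': "step n w1 q (S (snd (exec S n w1 q t))) (ps,E,c) = (ps',E',c')"
    by (cases "step n w1 q (S (snd (exec S n w1 q t))) (ps,E,c)") auto
  have "set (fst (stt S n w1 q (Suc t))) \<subseteq> V" using Suc.prems by auto
  hence P2: "set ps' \<subseteq> V" using st st' by (simp add: stt_Suc)
  show ?case
    unfolding exec_Suc'
    using IH st eq1 st' view_eq[OF P2 assms, of E' c'] by simp
qed

definition Psi :: "real \<Rightarrow> (nat \<Rightarrow> real) \<Rightarrow> nat \<Rightarrow> state \<Rightarrow> real" where
  "Psi q f y st = (if y \<in> fst (snd st) then 0 else Min (insert (q + f 0) (f ` set (fst st))))"

lemma Psi_le: "y \<notin> fst (snd st) \<Longrightarrow> x \<in> insert (q + f 0) (f ` set (fst st)) \<Longrightarrow> Psi q f y st \<le> x"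
  by (simp add: Psi_def)

lemma Psi_step:
  assumes n: "n > 0" and g: "goodst n st" and fy: "f y = 0" and q: "q \<ge> 0"
    and lip: "\<forall>v<n. \<bar>f v - f (right_nb n v)\<bar> \<le> w v"
  shows "Psi q f y st \<le> Psi q f y (step n w q m st) + (snd (snd (step n w q m st)) - snd (snd st))"
proof -
  obtain ps E c where st: "st = (ps,E,c)" by (cases st) auto
  have wnn: "\<forall>v<n. w v \<ge> 0" using lip by (meson abs_ge_zero order.trans)
  show ?thesis
  proof (cases m)
    case Invoke
    show ?thesis
    proof (cases "y \<in> insert 0 E")
      case True
      show ?thesis
      proof (cases "y \<in> E")
        case True thus ?thesis using q by (simp add: st step_simps Invoke Psi_def)
      next
        case False
        hence "Psi q f y st \<le> q + f 0" using Psi_le[of y st "q + f 0" q f] st by simp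
        moreover have "y = 0" using False \<open>y \<in> insert 0 E\<close> by auto
        ultimately show ?thesis using fy by (simp add: st step_simps Invoke Psi_def)
      qed
    next
      case False
      let ?A = "insert (q + f 0) (f ` set (ps @ [0]))"
      have "Psi q f y st - q \<le> Min ?A"
      proof (rule Min.boundedI)
        show "finite ?A" by simp
        show "?A \<noteq> {}" by simp
        fix a assume aA: "a \<in> ?A"
        show "Psi q f y st - q \<le> a"
        proof -
          note aA
          moreover have "Psi q f y st \<le> q + f 0" using Psi_le[of y st "q + f 0" q f] st False by simp
          moreover have "\<forall>p\<in>set ps. Psi q f y st \<le> f p" using Psi_le[of y st _ q f] st False by auto
          ultimately show ?thesis using q by auto
        qed
      qed
      moreover have "Psi q f y (ps@[0], insert 0 E, c+q) = Min ?A"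
        unfolding Psi_def fst_conv snd_conv by (simp only: False if_False)
      moreover have "step n w q m st = (ps@[0], insert 0 E, c+q)" by (simp add: st step_simps Invoke)
      ultimately show ?thesis by (simp only: st fst_conv snd_conv)
    qed
  next
    case (Go i d)
    show ?thesis
    proof (cases "i < length ps")
      case False thus ?thesis by (simp add: st step_simps Go)
    next
      case True
      define v where "v = ps!i"
      define v' where "v' = (if d then right_nb n v else left_nb n v)"
      define e where "e = (if d then w v else w (left_nb n v))"
      have vn: "v < n" using g True by (auto simp: st goodst_def v_def)
      have lip': "\<bar>f v - f v'\<bar> \<le> e"
      proof (cases d)
        case True thus ?thesis using lip vn by (simp add: v'_def e_def)
      next
        case False
        have "left_nb n v < n" using n by (simp add: left_nb_lt)
        hence "\<bar>f (left_nb n v) - f (right_nb n (left_nb n v))\<bar> \<le> w (left_nb n v)" using lip by blast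
        thus ?thesis using False right_left[OF n vn] by (simp add: v'_def e_def abs_minus_commute)
      qed
      have e0: "e \<ge> 0" using lip' by (meson abs_ge_zero order.trans)
      have stp: "step n w q m (ps,E,c) = (ps[i := v'], insert v' E, c + e)"
        using True by (simp add: st step_simps Go v_def v'_def e_def)
      show ?thesis
      proof (cases "y \<in> insert v' E")
        case yin: True
        show ?thesis
        proof (cases "y \<in> E")
          case True thus ?thesis using e0 by (simp add: stp st Psi_def)
        next
          case False
          hence "y = v'" using yin by auto
          have "Psi q f y st \<le> f v" using Psi_le[of y st "f v" q f] st False True v_def by simp
          thus ?thesis using lip' fy \<open>y = v'\<close> by (simp add: stp st Psi_def)
        qed
      next
        case False
        let ?A = "insert (q + f 0) (f ` set (ps[i := v']))"
        have "Psi q f y st - e \<le> Min ?A"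
        proof (rule Min.boundedI)
          show "finite ?A" by simp
          show "?A \<noteq> {}" by simp
          fix a assume a: "a \<in> ?A"
          show "Psi q f y st - e \<le> a"
          proof -
            have h1: "Psi q f y st \<le> q + f 0" using Psi_le[of y st "q + f 0" q f] st False by simp
            have h2: "\<forall>p\<in>set ps. Psi q f y st \<le> f p" using Psi_le[of y st _ q f] st False by auto
            have "set (ps[i := v']) \<subseteq> insert v' (set ps)" by (rule set_update_subset_insert)
            hence "a = q + f 0 \<or> a = f v' \<or> (\<exists>p\<in>set ps. a = f p)" using a by auto
            moreover have "Psi q f y st \<le> f v" using h2 True v_def by simp
            ultimately show ?thesis using h1 h2 e0 lip' by (auto simp: abs_le_iff)
          qed
        qed
        moreover have "Psi q f y (ps[i := v'], insert v' E, c + e) = Min ?A"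
          unfolding Psi_def fst_conv snd_conv by (simp only: False if_False)
        ultimately show ?thesis by (simp only: stp st fst_conv snd_conv)
      qed
    qed
  qed
qed

lemma Psi_exec_mono:
  assumes n: "n > 0" and fy: "f y = 0" and q: "q \<ge> 0"
    and lip: "\<forall>v<n. \<bar>f v - f (right_nb n v)\<bar> \<le> w v" and le: "t1 \<le> t2"
  shows "snd (snd (stt S n w q t1)) + Psi q f y (stt S n w q t1)
       \<le> snd (snd (stt S n w q t2)) + Psi q f y (stt S n w q t2)"
proof -
  have "snd (snd (stt S n w q t)) + Psi q f y (stt S n w q t)
       \<le> snd (snd (stt S n w q (Suc t))) + Psi q f y (stt S n w q (Suc t))" for t
    unfolding stt_Suc using Psi_step[OF n exec_good[OF n, of S w q t] fy q lip, of "S (snd (exec S n w q t))"]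
    by linarith
  from lift_Suc_mono_le[of "\<lambda>t. snd (snd (stt S n w q t)) + Psi q f y (stt S n w q t)", OF this le]
  show ?thesis .
qed




lemma online_lb:
  assumes n: "n > 0" and q: "q \<ge> 0" and lip: "\<forall>v<n. \<bar>f v - f (right_nb n v)\<bar> \<le> w v"
    and fy: "f y = 0" and yn: "y < n" and yT: "y \<notin> fst (snd (stt S n w q T))"
    and ex: "online_explores S n w q"
  shows "snd (snd (stt S n w q T)) + Psi q f y (stt S n w q T) \<le> online_cost S n w q"
proof -
  define ts where "ts = (LEAST t. explored n (stt S n w q t))"
  have e: "explored n (stt S n w q ts)"
    using ex unfolding online_explores_def ts_def by (rule LeastI_ex)
  hence yin: "y \<in> fst (snd (stt S n w q ts))" using yn by (auto simp: explored_def)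
  have le: "T \<le> ts"
  proof (rule ccontr)
    assume "\<not> T \<le> ts"
    hence "ts \<le> T" by simp
    from exec_E_mono[OF n this] yin yT show False by blast
  qed
  from Psi_exec_mono[OF n fy q lip le, of S]
  have "snd (snd (stt S n w q T)) + Psi q f y (stt S n w q T)
       \<le> snd (snd (stt S n w q ts)) + Psi q f y (stt S n w q ts)" .
  moreover have "Psi q f y (stt S n w q ts) = 0" using yin by (simp add: Psi_def)
  ultimately show ?thesis by (simp add: online_cost_def cost_of_def ts_def)
qed

lemma online_lb0:
  assumes n: "n > 0" and q: "q \<ge> 0" and wnn: "\<forall>i<n. w i \<ge> 0"
    and yn: "y < n" and yT: "y \<notin> fst (snd (stt S n w q T))"
    and ex: "online_explores S n w q"
  shows "snd (snd (stt S n w q T)) \<le> online_cost S n w q"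
proof -
  define ts where "ts = (LEAST t. explored n (stt S n w q t))"
  have e: "explored n (stt S n w q ts)"
    using ex unfolding online_explores_def ts_def by (rule LeastI_ex)
  hence yin: "y \<in> fst (snd (stt S n w q ts))" using yn by (auto simp: explored_def)
  have le: "T \<le> ts"
  proof (rule ccontr)
    assume "\<not> T \<le> ts"
    hence "ts \<le> T" by simp
    from exec_E_mono[OF n this] yin yT show False by blast
  qed
  from exec_cost_mono[OF n le wnn q] show ?thesis by (simp add: online_cost_def cost_of_def ts_def)
qed

definition oinv :: "nat \<Rightarrow> real \<Rightarrow> state \<Rightarrow> bool" where
  "oinv n q st \<longleftrightarrow> (\<forall>p\<in>set (fst st). p < n) \<and> (fst st = [] \<longrightarrow> fst (snd st) = {} \<and> snd (snd st) = 0)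
     \<and> (fst st \<noteq> [] \<longrightarrow> snd (snd st) \<ge> q)"

lemma oinv_step:
  assumes n: "n > 0" and wnn: "\<forall>i<n. w i \<ge> 0" and q: "q > 0" and I: "oinv n q st"
  shows "oinv n q (step n w q m st)"
proof -
  obtain ps E c where st: "st = (ps,E,c)" by (cases st) auto
  show ?thesis
  proof (cases m)
    case Invoke
    have "c \<ge> 0" using I q by (cases "ps = []") (auto simp: st oinv_def)
    thus ?thesis using I n q by (auto simp: st step_simps Invoke oinv_def)
  next
    case (Go i d)
    show ?thesis
    proof (cases "i < length ps")
      case True
      let ?x = "(if d then right_nb n (ps!i) else left_nb n (ps!i))"
      have "set (ps[i := ?x]) \<subseteq> insert ?x (set ps)" by (rule set_update_subset_insert)
      moreover have "?x < n" using n by (auto simp: right_nb_lt left_nb_lt)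
      moreover have "ps!i < n" using I True by (auto simp: st oinv_def)
      moreover have "left_nb n (ps!i) < n" using n by (simp add: left_nb_lt)
      moreover have "ps \<noteq> []" using True by auto
      moreover have "w (ps!i) \<ge> 0" "w (left_nb n (ps!i)) \<ge> 0" using wnn calculation by auto
      ultimately show ?thesis using I True
        by (auto simp: st step_simps Go oinv_def)
    next
      case False thus ?thesis using I by (simp add: st step_simps Go)
    qed
  qed
qed

lemma oinv_fold:
  assumes n: "n > 0" and wnn: "\<forall>i<n. w i \<ge> 0" and q: "q > 0"
  shows "oinv n q st \<Longrightarrow> oinv n q (fold (step n w q) ms st)"
proof (induction ms arbitrary: st)
  case Nil thus ?case by simp
next
  case (Cons m ms) thus ?case using oinv_step[OF n wnn q Cons.prems, of m] by simp
qed

lemma opt_bounds: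
  assumes r: "is_ring n w" and q: "q > 0" and e: "explored n (run_moves n w q ms)"
  shows "q \<le> opt_cost n w q \<and> opt_cost n w q \<le> cost_of (run_moves n w q ms)"
proof -
  have n: "n > 0" using r by (simp add: is_ring_def)
  have wnn: "\<forall>i<n. w i \<ge> 0" using r by (auto simp: is_ring_def less_imp_le)
  have lb: "q \<le> cost_of (run_moves n w q ms')" if "explored n (run_moves n w q ms')" for ms'
  proof -
    have I: "oinv n q (run_moves n w q ms')" unfolding run_moves_def
      by (rule oinv_fold[OF n wnn q]) (simp add: oinv_def init_state_def)
    have "0 \<in> fst (snd (run_moves n w q ms'))" using that n by (auto simp: explored_def)
    thus ?thesis using I by (auto simp: oinv_def cost_of_def)
  qed
  let ?A = "{cost_of (run_moves n w q ms) | ms. explored n (run_moves n w q ms)}"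
  have ne: "?A \<noteq> {}" using e by blast
  have bdd: "bdd_below ?A" using lb by (auto intro!: bdd_belowI)
  have "q \<le> Inf ?A" using ne lb by (auto intro!: cInf_greatest)
  moreover have "Inf ?A \<le> cost_of (run_moves n w q ms)" using e bdd by (auto intro!: cInf_lower)
  ultimately show ?thesis by (simp add: opt_cost_def)
qed

lemma rnb: "Suc p < n \<Longrightarrow> right_nb n p = Suc p" by (simp add: right_nb_def)
lemma lnb: "Suc p < n \<Longrightarrow> left_nb n (Suc p) = p" by (simp add: left_nb_def)
lemma rnb_last: "n > 0 \<Longrightarrow> right_nb n (n - 1) = 0" by (simp add: right_nb_def)
lemma lnb_0: "n > 0 \<Longrightarrow> left_nb n 0 = n - 1" by (simp add: left_nb_def)

lemma walkR:
  "j + k < n \<Longrightarrow> fold (step n w q) (replicate k (Go 0 True)) ([j],E,c)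
     = ([j+k], E \<union> {j<..j+k}, c + (\<Sum>i=j..<j+k. w i))"
proof (induction k)
  case 0 thus ?case by simp
next
  case (Suc k)
  have "replicate (Suc k) (Go 0 True) = replicate k (Go 0 True) @ [Go 0 True]"
    by (simp add: replicate_append_same)
  hence "fold (step n w q) (replicate (Suc k) (Go 0 True)) ([j],E,c)
     = step n w q (Go 0 True) ([j+k], E \<union> {j<..j+k}, c + (\<Sum>i=j..<j+k. w i))"
    using Suc by simp
  also have "\<dots> = ([j + Suc k], E \<union> {j<..j + Suc k}, c + (\<Sum>i=j..<j + Suc k. w i))"
    using Suc.prems by (auto simp: step_simps rnb)
  finally show ?case .
qed

lemma walkL:
  "j + k < n \<Longrightarrow> fold (step n w q) (replicate k (Go 0 False)) ([j+k],E,c)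
     = ([j], E \<union> {j..<j+k}, c + (\<Sum>i=j..<j+k. w i))"
proof (induction k arbitrary: E c)
  case 0 thus ?case by simp
next
  case (Suc k)
  have "fold (step n w q) (replicate (Suc k) (Go 0 False)) ([j + Suc k],E,c)
     = fold (step n w q) (replicate k (Go 0 False)) ([j+k], insert (j+k) E, c + w (j+k))"
    using Suc.prems by (simp add: step_simps lnb[of "j+k" n, simplified])
  also have "\<dots> = ([j], insert (j+k) E \<union> {j..<j+k}, c + w (j+k) + (\<Sum>i=j..<j+k. w i))"
    using Suc by simp
  also have "\<dots> = ([j], E \<union> {j..<j + Suc k}, c + (\<Sum>i=j..<j + Suc k. w i))"
    by auto
  finally show ?case .
qed




definition ES :: "nat \<Rightarrow> nat \<Rightarrow> nat \<Rightarrow> nat set" where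
  "ES n R L = {..R} \<union> {n-L..<n}"

definition phase :: "nat \<Rightarrow> nat \<Rightarrow> real \<Rightarrow> real \<Rightarrow> state \<Rightarrow> bool" where
  "phase n K q e st \<longleftrightarrow> st = ([],{},0) \<or> (\<exists>p R L c. st = ([p], ES n R L, c) \<and> R < K \<and> L < K \<and>
     ((p \<le> R \<and> c \<ge> q + e * real (2*L + 2*R - p)) \<or>
      (n - L \<le> p \<and> p < n \<and> c \<ge> q + e * real (2*L + 2*R - (n - p)))))"

definition trigB :: "nat \<Rightarrow> nat \<Rightarrow> real \<Rightarrow> real \<Rightarrow> state \<Rightarrow> bool" where
  "trigB n K q e st \<longleftrightarrow> (\<exists>L c. st = ([K-1], ES n (K-1) L, c) \<and> L < K \<and> c \<ge> q + e * real (2*L + K - 1))"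

definition trigC :: "nat \<Rightarrow> nat \<Rightarrow> real \<Rightarrow> real \<Rightarrow> state \<Rightarrow> bool" where
  "trigC n K q e st \<longleftrightarrow> (\<exists>R c. st = ([n-(K-1)], ES n R (K-1), c) \<and> R < K \<and> c \<ge> q + e * real (K - 1 + 2*R))"

lemma phaseI_R: "p \<le> R \<Longrightarrow> R < K \<Longrightarrow> L < K \<Longrightarrow> c \<ge> q + e * real (2*L + 2*R - p)
   \<Longrightarrow> phase n K q e ([p], ES n R L, c)"
  unfolding phase_def by blast

lemma phaseI_L: "n - L \<le> p \<Longrightarrow> p < n \<Longrightarrow> R < K \<Longrightarrow> L < K \<Longrightarrow> c \<ge> q + e * real (2*L + 2*R - (n - p))
   \<Longrightarrow> phase n K q e ([p], ES n R L, c)"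
  unfolding phase_def by blast

lemma bnd: assumes "c \<ge> q + e * real X" "X' \<le> X + 1" "e > 0" shows "c + e \<ge> q + e * real X'"
proof -
  have "real X' \<le> real X + 1" using assms(2) by linarith
  hence "e * real X' \<le> e * (real X + 1)" using assms(3) by (simp add: mult_left_mono)
  thus ?thesis using assms(1) by (simp add: algebra_simps)
qed

locale base =
  fixes n K :: nat and q e :: real
  assumes K2: "K \<ge> 2" and nK: "n \<ge> 2*K+2" and e0: "e > 0" and q0: "q > 0"
begin

lemma n0: "n > 0" using nK by simp

lemma mv_right_R:
  assumes "p \<le> R" "R < K" "L < K" "c \<ge> q + e * real (2*L + 2*R - p)"
  shows "phase n K q e (step n (\<lambda>_. e) q (Go 0 True) ([p], ES n R L, c)) \<or> trigB n K q e ([p], ES n R L, c)"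
proof -
  have pn: "Suc p < n" using assms nK by linarith
  have st: "step n (\<lambda>_. e) q (Go 0 True) ([p], ES n R L, c) = ([Suc p], insert (Suc p) (ES n R L), c + e)"
    using pn by (simp add: step_simps rnb)
  consider "p < R" | "p = R" "Suc R < K" | "p = R" "Suc R = K" using assms by linarith
  thus ?thesis
  proof cases
    case 1
    have "insert (Suc p) (ES n R L) = ES n R L" using 1 by (auto simp: ES_def)
    moreover have "c + e \<ge> q + e * real (2*L + 2*R - Suc p)"
      by (rule bnd[OF assms(4)]) (use 1 e0 in arith)+
    hence "phase n K q e ([Suc p], ES n R L, c + e)" using assms 1 by (intro phaseI_R) auto
    ultimately show ?thesis using st by simp
  next
    case 2
    have "insert (Suc p) (ES n R L) = ES n (Suc R) L" using 2 by (auto simp: ES_def)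
    moreover have "c + e \<ge> q + e * real (2*L + 2*Suc R - Suc p)"
      by (rule bnd[OF assms(4)]) (use 2 e0 in arith)+
    hence "phase n K q e ([Suc p], ES n (Suc R) L, c + e)" using assms 2 by (intro phaseI_R) auto
    ultimately show ?thesis using st by simp
  next
    case 3
    have "R = K - 1" "p = K - 1" using 3 by auto
    moreover have "2*L + 2*R - p = 2*L + K - 1" using 3 by linarith
    ultimately have "trigB n K q e ([p], ES n R L, c)" using assms unfolding trigB_def by auto
    thus ?thesis by simp
  qed
qed


lemma mv_right_L:
  assumes "n - L \<le> p" "p < n" "R < K" "L < K" "c \<ge> q + e * real (2*L + 2*R - (n - p))"
  shows "phase n K q e (step n (\<lambda>_. e) q (Go 0 True) ([p], ES n R L, c))"
proof (cases "Suc p = n")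
  case True
  have p: "p = n - 1" using True by simp
  have st: "step n (\<lambda>_. e) q (Go 0 True) ([p], ES n R L, c) = ([0], ES n R L, c + e)"
  proof -
    have "right_nb n p = 0" using p n0 by (simp add: right_nb_def)
    moreover have "insert 0 (ES n R L) = ES n R L" by (auto simp: ES_def)
    ultimately show ?thesis by (simp add: step_simps)
  qed
  have "c + e \<ge> q + e * real (2*L + 2*R - 0)"
    by (rule bnd[OF assms(5)]) (use p e0 in arith)+
  hence "phase n K q e ([0], ES n R L, c + e)" using assms by (intro phaseI_R) auto
  thus ?thesis using st by simp
next
  case False
  hence pn: "Suc p < n" using assms by linarith
  have st: "step n (\<lambda>_. e) q (Go 0 True) ([p], ES n R L, c) = ([Suc p], ES n R L, c + e)"
    using pn assms by (auto simp: step_simps rnb ES_def)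
  have "c + e \<ge> q + e * real (2*L + 2*R - (n - Suc p))"
    by (rule bnd[OF assms(5)]) (use pn assms(1-4) e0 in arith)+
  hence "phase n K q e ([Suc p], ES n R L, c + e)" using assms pn by (intro phaseI_L) auto
  thus ?thesis using st by simp
qed

lemma mv_left_R:
  assumes "p \<le> R" "R < K" "L < K" "c \<ge> q + e * real (2*L + 2*R - p)"
  shows "phase n K q e (step n (\<lambda>_. e) q (Go 0 False) ([p], ES n R L, c))"
proof (cases "p = 0")
  case True
  show ?thesis
  proof (cases "L = 0")
    case L0: True
    have st: "step n (\<lambda>_. e) q (Go 0 False) ([p], ES n R L, c) = ([n-1], ES n R 1, c + e)"
      using n0 True L0 by (auto simp: step_simps lnb_0 ES_def)
    have "c + e \<ge> q + e * real (2*1 + 2*R - (n - (n-1)))"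
      by (rule bnd[OF assms(4)]) (use True L0 n0 e0 in arith)+
    hence "phase n K q e ([n-1], ES n R 1, c + e)" using assms K2 n0 by (intro phaseI_L) auto
    thus ?thesis using st by simp
  next
    case L1: False
    have st: "step n (\<lambda>_. e) q (Go 0 False) ([p], ES n R L, c) = ([n-1], ES n R L, c + e)"
      using n0 True L1 by (auto simp: step_simps lnb_0 ES_def)
    have "c + e \<ge> q + e * real (2*L + 2*R - (n - (n-1)))"
      by (rule bnd[OF assms(4)]) (use True L1 n0 e0 in arith)+
    hence "phase n K q e ([n-1], ES n R L, c + e)" using assms n0 L1 by (intro phaseI_L) auto
    thus ?thesis using st by simp
  qed
next
  case False
  then obtain p' where p: "p = Suc p'" by (cases p) auto
  have pn: "Suc p' < n" using assms nK p by linarith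
  have st: "step n (\<lambda>_. e) q (Go 0 False) ([p], ES n R L, c) = ([p'], ES n R L, c + e)"
    using pn p assms by (auto simp: step_simps lnb ES_def)
  have "c + e \<ge> q + e * real (2*L + 2*R - p')"
    by (rule bnd[OF assms(4)]) (use p e0 in arith)+
  hence "phase n K q e ([p'], ES n R L, c + e)" using assms p by (intro phaseI_R) auto
  thus ?thesis using st by simp
qed

lemma mv_left_L:
  assumes "n - L \<le> p" "p < n" "R < K" "L < K" "c \<ge> q + e * real (2*L + 2*R - (n - p))"
  shows "phase n K q e (step n (\<lambda>_. e) q (Go 0 False) ([p], ES n R L, c)) \<or> trigC n K q e ([p], ES n R L, c)"
proof -
  have p0: "p > 0" using assms(1,4) nK by linarith
  then obtain p' where p: "p = Suc p'" by (cases p) auto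
  have pn: "Suc p' < n" using assms(2) p by linarith
  have st: "step n (\<lambda>_. e) q (Go 0 False) ([p], ES n R L, c) = ([p'], insert p' (ES n R L), c + e)"
    using pn p by (simp add: step_simps lnb)
  consider "n - L < p" | "p = n - L" "Suc L < K" | "p = n - L" "Suc L = K" using assms(1,4) by linarith
  thus ?thesis
  proof cases
    case 1
    have "insert p' (ES n R L) = ES n R L" using 1 p pn by (auto simp: ES_def)
    moreover have "c + e \<ge> q + e * real (2*L + 2*R - (n - p'))"
      by (rule bnd[OF assms(5)]) (use 1 p assms(1-4) e0 in arith)+
    then have "phase n K q e ([p'], ES n R L, c + e)" using assms 1 p by (intro phaseI_L) auto
    ultimately show ?thesis using st by simp
  next
    case 2
    have e1: "n - p' = Suc L" "n - p = L" "n - L = Suc p'" "n - Suc L = p'" using 2 p pn by linarith+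
    have "insert p' (ES n R L) = ES n R (Suc L)" using pn unfolding ES_def e1 by auto
    moreover have "c + e \<ge> q + e * real (2*Suc L + 2*R - (n - p'))"
    proof (rule bnd[OF assms(5)])
      show "2*Suc L + 2*R - (n - p') \<le> 2*L + 2*R - (n - p) + 1" unfolding e1 by simp
    qed (rule e0)
    then have "phase n K q e ([p'], ES n R (Suc L), c + e)"
      using assms(3) 2 pn e1 by (intro phaseI_L) auto
    ultimately show ?thesis using st by simp
  next
    case 3
    have "L = K - 1" "p = n - (K - 1)" using 3 by auto
    moreover have "n - p = L" using 3 assms(4) nK by linarith
    moreover have "2*L + 2*R - (n - p) = K - 1 + 2*R" using 3 calculation by linarith
    ultimately have cc: "c \<ge> q + e * real (K - 1 + 2*R)" using assms(5) by metis
    have "trigC n K q e ([p], ES n R L, c)" unfolding trigC_def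
      using cc assms(3) \<open>L = K - 1\<close> \<open>p = n - (K - 1)\<close> by blast
    thus ?thesis by simp
  qed
qed

end



context base begin

lemma phase_step:
  assumes ph: "phase n K q e st"
  shows "phase n K q e (step n (\<lambda>_. e) q m st) \<or> (m = Invoke \<and> fst st \<noteq> [])
    \<or> (m = Go 0 True \<and> trigB n K q e st) \<or> (m = Go 0 False \<and> trigC n K q e st)"
proof (cases "st = ([],{},0)")
  case True
  show ?thesis
  proof (cases m)
    case Invoke
    have "insert 0 {} = ES n 0 0" by (auto simp: ES_def)
    moreover have "phase n K q e ([0], ES n 0 0, 0 + q)" using K2 by (intro phaseI_R) auto
    ultimately show ?thesis using True Invoke by (simp add: step_simps)
  next
    case (Go i d) thus ?thesis using True ph by (simp add: step_simps)
  qed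
next
  case False
  then obtain p R L c where st: "st = ([p], ES n R L, c)" and RL: "R < K" "L < K" and
    side: "(p \<le> R \<and> c \<ge> q + e * real (2*L + 2*R - p)) \<or>
      (n - L \<le> p \<and> p < n \<and> c \<ge> q + e * real (2*L + 2*R - (n - p)))"
    using ph unfolding phase_def by blast
  show ?thesis
  proof (cases m)
    case Invoke thus ?thesis using st by simp
  next
    case (Go i d)
    show ?thesis
    proof (cases "i = 0")
      case False thus ?thesis using ph st Go by (simp add: step_simps)
    next
      case True
      show ?thesis
      proof (cases d)
        case True
        hence mm: "m = Go 0 True" using Go \<open>i = 0\<close> by simp
        show ?thesis unfolding st mm using side mv_right_R[OF _ RL, of p c] mv_right_L[of L p R c] RL by blast
      next
        case False
        hence mm: "m = Go 0 False" using Go \<open>i = 0\<close> by simp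
        show ?thesis unfolding st mm using side mv_left_R[OF _ RL, of p c] mv_left_L[of L p R c] RL by blast
      qed
    qed
  qed
qed

lemma phase_notK: "phase n K q e st \<Longrightarrow> K \<notin> fst (snd st)"
  unfolding phase_def ES_def using nK by auto

end



lemma switch:
  assumes n: "n > 0"
    and agree: "\<forall>v\<in>fst (snd (stt S n w1 q t)). w1 v = w2 v \<and> w1 (left_nb n v) = w2 (left_nb n v)"
  shows "exec S n w2 q t = exec S n w1 q t"
proof (rule indist[OF agree])
  show "\<forall>s\<le>t. set (fst (stt S n w1 q s)) \<subseteq> fst (snd (stt S n w1 q t))"
  proof (intro allI impI)
    fix s assume "s \<le> t"
    have "set (fst (stt S n w1 q s)) \<subseteq> fst (snd (stt S n w1 q s))"
      using exec_good[OF n, of S w1 q s] by (simp add: goodst_def)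
    also have "\<dots> \<subseteq> fst (snd (stt S n w1 q t))" by (rule exec_E_mono[OF n \<open>s \<le> t\<close>])
    finally show "set (fst (stt S n w1 q s)) \<subseteq> fst (snd (stt S n w1 q t))" .
  qed
qed

lemma switch_Suc:
  assumes n: "n > 0"
    and agree: "\<forall>v\<in>fst (snd (stt S n w1 q t)). w1 v = w2 v \<and> w1 (left_nb n v) = w2 (left_nb n v)"
  shows "stt S n w2 q (Suc t) = step n w2 q (S (snd (exec S n w1 q t))) (stt S n w1 q t)"
  using switch[OF n agree] by (simp add: stt_Suc)

lemma sum_if_bound:
  fixes w :: "nat \<Rightarrow> real"
  assumes "finite A" "\<forall>i\<in>A. w i \<le> (if P i then e else d)" "e \<ge> 0" "d \<ge> 0"
  shows "sum w A \<le> e * card {i\<in>A. P i} + d * card A"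
proof -
  have "sum w A \<le> (\<Sum>i\<in>A. (if P i then e else 0) + d)"
    by (rule sum_mono) (use assms in auto)
  also have "\<dots> = (\<Sum>i\<in>A. if P i then e else 0) + d * card A" by (simp add: sum.distrib)
  also have "(\<Sum>i\<in>A. if P i then e else 0) = sum (\<lambda>_. e) {i\<in>A. P i}"
    using sum.inter_filter[OF assms(1), of "\<lambda>_. e" P] by simp
  finally show ?thesis by (simp add: mult.commute)
qed

lemma ratio_ge:
  assumes ex: "online_explores S n w q" and q: "q > 0" and o: "opt_cost n w q \<ge> q"
    and D: "D \<ge> 0" and main: "2 * online_cost S n w q \<ge> 3 * opt_cost n w q - D"
  shows "ratio S n w q \<ge> ereal (3/2 - D / (2*q))"
proof -
  let ?o = "opt_cost n w q" and ?c = "online_cost S n w q"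
  have op: "?o > 0" using o q by linarith
  have "D / (2*q) * ?o \<ge> D / 2"
  proof -
    have "D / (2*q) * ?o = D/2 * (?o / q)" by (simp add: field_simps)
    moreover have "?o / q \<ge> 1" using o q by simp
    ultimately show ?thesis using D by (metis mult.right_neutral mult_left_mono zero_le_divide_iff zero_le_numeral)
  qed
  hence "(3/2 - D / (2*q)) * ?o \<le> ?c" using main by (simp add: algebra_simps)
  hence "3/2 - D / (2*q) \<le> ?c / ?o" using op by (simp add: pos_le_divide_eq)
  thus ?thesis using ex by (simp add: ratio_def)
qed




locale cs = base +
  fixes S :: strategy and d H :: real
  assumes eK: "e * real (K + 5) = q" and dn: "d * real n = e" and d0: "d > 0" and H: "H = 2*q"
begin

lemma Kq: "e * real K \<le> q" using eK e0 by (simp add: algebra_simps)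

lemma caseA:
  assumes st0: "stt S n (\<lambda>_. e) q T0 = ([p], ES n R L, c)" and RL: "R < K" "L < K"
    and side: "(p \<le> R \<and> c \<ge> q + e * real (2*L + 2*R - p)) \<or>
      (n - L \<le> p \<and> p < n \<and> c \<ge> q + e * real (2*L + 2*R - (n - p)))"
    and mv: "S (snd (exec S n (\<lambda>_. e) q T0)) = Invoke"
  shows "\<exists>w. is_ring n w \<and> ratio S n w q \<ge> ereal (3/2)"
proof -
  define w where "w = (\<lambda>i. if i \<le> R \<or> n - L - 1 \<le> i then e else d)"
  have ring: "is_ring n w" using nK K2 e0 d0 by (auto simp: is_ring_def w_def)
  have agree: "\<forall>v\<in>fst (snd (stt S n (\<lambda>_. e) q T0)). e = w v \<and> e = w (left_nb n v)"
  proof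
    fix v assume "v \<in> fst (snd (stt S n (\<lambda>_. e) q T0))"
    hence v: "v \<le> R \<or> (n - L \<le> v \<and> v < n)" using st0 by (auto simp: ES_def)
    have "left_nb n v \<le> R \<or> n - L - 1 \<le> left_nb n v"
    proof (cases "v = 0")
      case True thus ?thesis using n0 by (simp add: lnb_0 diff_le_mono2)
    next
      case False
      then obtain v' where "v = Suc v'" by (cases v) auto
      moreover have "Suc v' < n" using v RL nK \<open>v = Suc v'\<close> by linarith
      ultimately show ?thesis using v by (simp add: lnb) linarith
    qed
    thus "e = w v \<and> e = w (left_nb n v)" using v by (auto simp: w_def)
  qed
  have stT: "stt S n w q (Suc T0) = ([p, 0], insert 0 (ES n R L), c + q)"
    using switch_Suc[OF n0 agree] st0 mv by (simp add: step_simps)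
  show ?thesis
  proof (cases "online_explores S n w q")
    case False thus ?thesis using ring by (intro exI[of _ w]) (simp add: ratio_def)
  next
    case True
    have yn: "Suc R \<notin> fst (snd (stt S n w q (Suc T0)))" using stT RL nK by (auto simp: ES_def)
    have on: "c + q \<le> online_cost S n w q"
      using online_lb0[OF n0 _ _ _ yn True] q0 ring RL nK stT by (auto simp: is_ring_def less_imp_le)
    define ms where "ms = Invoke # replicate (n-1) (Go 0 True)"
    have run: "run_moves n w q ms = ([n-1], {0} \<union> {0<..n-1}, q + (\<Sum>i=0..<n-1. w i))"
      using walkR[of 0 "n-1" n w q "{0}" q] n0 by (simp add: run_moves_def ms_def init_state_def step_simps)
    have expl: "explored n (run_moves n w q ms)" unfolding run explored_def by auto
    have sm: "(\<Sum>i=0..<n-1. w i) \<le> e * real (R + L + 1) + d * real n"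
    proof -
      have "(\<Sum>i=0..<n-1. w i) \<le> e * card {i\<in>{0..<n-1}. i \<le> R \<or> n - L - 1 \<le> i} + d * card {0..<n-1}"
        by (rule sum_if_bound) (use e0 d0 in \<open>auto simp: w_def\<close>)
      moreover have "{i\<in>{0..<n-1}. i \<le> R \<or> n - L - 1 \<le> i} = {0..R} \<union> {n-L-1..<n-1}"
        using RL nK by auto
      moreover have "card ({0..R} \<union> {n-L-1..<n-1}) = R + 1 + L"
        using RL nK by (subst card_Un_disjoint) auto
      moreover have "d * card {0..<n-1} \<le> d * real n" using d0 by simp
      ultimately show ?thesis by simp
    qed
    have ob: "q \<le> opt_cost n w q \<and> opt_cost n w q \<le> q + e * real (R + L + 2)"
      using opt_bounds[OF ring q0 expl] run sm dn by (simp add: cost_of_def algebra_simps)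
    have key: "2 * (c + q) \<ge> 3 * (q + e * real (R + L + 2))"
    proof -
      have "2 * (c + q) \<ge> 3 * q + (q - e * real (K + 5)) + 3 * (e * real (R + L + 2))"
      proof (cases "p \<le> R \<and> c \<ge> q + e * real (2*L + 2*R - p)")
        case True
        hence "real (2*L + 2*R - p) \<ge> real (2*L + R)" by simp
        hence "c \<ge> q + e * real (2*L + R)" using True e0 by (smt (verit) mult_left_mono)
        moreover have "e * real (R + 6) \<le> e * real (K + 5)" using RL e0 by simp
        moreover have "e * real L \<ge> 0" using e0 by simp
        ultimately show ?thesis by (simp add: algebra_simps)
      next
        case False
        hence "n - L \<le> p \<and> p < n \<and> c \<ge> q + e * real (2*L + 2*R - (n - p))" using side by blast
        hence "2*L + 2*R - (n - p) \<ge> L + 2*R" by linarith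
        hence "real (2*L + 2*R - (n - p)) \<ge> real (L + 2*R)" by (simp only: of_nat_le_iff)
        hence "c \<ge> q + e * real (L + 2*R)" using False side e0 by (smt (verit) mult_left_mono)
        moreover have "e * real (L + 6) \<le> e * real (K + 5)" using RL e0 by simp
        moreover have "e * real R \<ge> 0" using e0 by simp
        ultimately show ?thesis by (simp add: algebra_simps)
      qed
      thus ?thesis using eK by simp
    qed
    have "ratio S n w q \<ge> ereal (3/2 - 0 / (2*q))"
      by (rule ratio_ge[OF True q0]) (use ob on key in auto)
    thus ?thesis using ring by auto
  qed
qed

end



context cs begin

lemma caseB:
  assumes st0: "stt S n (\<lambda>_. e) q T0 = ([K-1], ES n (K-1) L, c)" and LK: "L < K"
    and cb: "c \<ge> q + e * real (2*L + K - 1)"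
    and mv: "S (snd (exec S n (\<lambda>_. e) q T0)) = Go 0 True"
  shows "\<exists>w. is_ring n w \<and> ratio S n w q \<ge> ereal (3/2 - 15 * e / (2*q))"
proof -
  define w where "w = (\<lambda>i. if i < K then e else if i = K then H else if n - L - 1 \<le> i then e else d)"
  have ring: "is_ring n w" using nK K2 e0 d0 q0 H by (auto simp: is_ring_def w_def)
  have agree: "\<forall>v\<in>fst (snd (stt S n (\<lambda>_. e) q T0)). e = w v \<and> e = w (left_nb n v)"
  proof
    fix v assume "v \<in> fst (snd (stt S n (\<lambda>_. e) q T0))"
    hence v: "v < K \<or> (n - L \<le> v \<and> v < n)" using st0 K2 by (auto simp: ES_def)
    have "left_nb n v < K \<or> (n - L - 1 \<le> left_nb n v \<and> left_nb n v \<noteq> K \<and> \<not> left_nb n v < K)"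
    proof (cases "v = 0")
      case True thus ?thesis using n0 LK nK by (simp add: lnb_0) linarith
    next
      case False
      then obtain v' where "v = Suc v'" by (cases v) auto
      moreover have "Suc v' < n" using v LK nK \<open>v = Suc v'\<close> by linarith
      ultimately show ?thesis using v LK nK by (simp add: lnb) linarith
    qed
    moreover have "v < K \<or> (K < v \<and> n - L - 1 \<le> v)" using v LK nK by linarith
    hence "w v = e" by (auto simp: w_def)
    moreover have "w (left_nb n v) = e" if "left_nb n v < K" using that by (simp add: w_def)
    moreover have "w (left_nb n v) = e" if "n - L - 1 \<le> left_nb n v \<and> left_nb n v \<noteq> K \<and> \<not> left_nb n v < K"
      using that by (simp add: w_def)
    ultimately show "e = w v \<and> e = w (left_nb n v)" by metis
  qed
  have K1: "Suc (K - 1) = K" using K2 by simp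
  have rK: "right_nb n (K-1) = K" using rnb[of "K-1" n] K1 nK by simp
  have wK1: "w (K-1) = e" using K2 by (simp add: w_def)
  have stT: "stt S n w q (Suc T0) = ([K], insert K (ES n (K-1) L), c + e)"
    using switch_Suc[OF n0 agree] st0 mv rK wK1 by (simp add: step_simps)
  define y where "y = n - L - 1"
  define f where "f = (\<lambda>v. if v \<le> K then real (v + L + 1) * e else if n - L - 1 \<le> v then real (v - (n - L - 1)) * e else 0)"
  have yK: "\<not> y \<le> K" using LK nK unfolding y_def by linarith
  have fy: "f y = 0" using yK by (simp add: f_def y_def)
  have lip: "\<forall>v<n. \<bar>f v - f (right_nb n v)\<bar> \<le> w v"
  proof (intro allI impI)
    fix v assume vn: "v < n"
    consider "v < K" | "v = K" | "K < v" "Suc v < n - L - 1" | "K < v" "Suc v = n - L - 1" | "n - L - 1 \<le> v" "Suc v < n" | "Suc v = n"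
      using vn LK nK by linarith
    thus "\<bar>f v - f (right_nb n v)\<bar> \<le> w v"
    proof cases
      case 1
      hence "right_nb n v = Suc v" using nK by (simp add: rnb)
      thus ?thesis using 1 e0 by (simp add: f_def w_def algebra_simps)
    next
      case 2
      hence r: "right_nb n v = Suc K" using nK by (simp add: rnb)
      have "\<not> (n - L - 1 \<le> Suc K)" using LK nK by linarith
      hence "f (Suc K) = 0" by (simp add: f_def)
      moreover have "real (K + L + 1) * e \<le> 2 * q"
      proof -
        have "real (K + L + 1) * e \<le> real (2*K) * e" using LK e0 by (intro mult_right_mono) auto
        thus ?thesis using Kq by (simp add: algebra_simps)
      qed
      ultimately show ?thesis using 2 r e0 H by (simp add: f_def w_def)
    next
      case 3
      hence "right_nb n v = Suc v" by (simp add: rnb)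
      thus ?thesis using 3 d0 by (simp add: f_def w_def)
    next
      case 4
      hence "right_nb n v = Suc v" using LK nK by (simp add: rnb)
      thus ?thesis using 4 d0 by (simp add: f_def w_def)
    next
      case 5
      hence "right_nb n v = Suc v" by (simp add: rnb)
      moreover have "real (Suc v - (n - L - 1)) = real (v - (n - L - 1)) + 1" using 5 by linarith
      moreover have "K < v" using 5 LK nK by linarith
      ultimately show ?thesis using 5 e0 by (simp add: f_def w_def algebra_simps)
    next
      case 6
      hence "right_nb n v = 0" using n0 by (simp add: right_nb_def)
      moreover have "real (v - (n - L - 1)) = real L" using 6 LK nK by linarith
      moreover have "K < v" "n - L - 1 \<le> v" using 6 LK nK by linarith+
      ultimately show ?thesis using 6 e0 by (simp add: f_def w_def algebra_simps)
    qed
  qed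
  show ?thesis
  proof (cases "online_explores S n w q")
    case False thus ?thesis using ring by (intro exI[of _ w]) (simp add: ratio_def)
  next
    case True
    have yn: "y \<notin> fst (snd (stt S n w q (Suc T0)))" using stT LK nK by (auto simp: ES_def y_def)
    have yl: "y < n" using nK by (simp add: y_def)
    have on0: "snd (snd (stt S n w q (Suc T0))) + Psi q f y (stt S n w q (Suc T0)) \<le> online_cost S n w q"
      by (rule online_lb[OF n0 _ lip fy yl yn True]) (use q0 in simp)
    have "Psi q f y (stt S n w q (Suc T0)) = min (q + f 0) (f K)"
      using yn stT by (simp add: Psi_def)
    also have "\<dots> = real (K + L + 1) * e" using Kq e0 by (simp add: f_def algebra_simps)
    finally have on: "c + e + real (K + L + 1) * e \<le> online_cost S n w q" using on0 stT by simp
    define a where "a = n - 2 - K"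
    have na: "n - 1 = K + 1 + a" using nK by (simp add: a_def)
    define ms where "ms = [Invoke, Go 0 False] @ replicate a (Go 0 False) @ replicate a (Go 0 True)
       @ [Go 0 True] @ replicate K (Go 0 True)"
    have s1: "fold (step n w q) [Invoke, Go 0 False] init_state = ([K + 1 + a], {0, K + 1 + a}, q + w (n-1))"
      using n0 na by (auto simp: init_state_def step_simps lnb_0)
    have s2: "fold (step n w q) (replicate a (Go 0 False)) ([K + 1 + a], {0, K + 1 + a}, q + w (n-1))
       = ([K+1], {0, K + 1 + a} \<union> {K+1..<K+1+a}, q + w (n-1) + (\<Sum>i=K+1..<K+1+a. w i))"
      using walkL[of "K+1" a n w q] na nK by simp
    have s3: "fold (step n w q) (replicate a (Go 0 True)) ([K+1], {0, K + 1 + a} \<union> {K+1..<K+1+a}, q + w (n-1) + (\<Sum>i=K+1..<K+1+a. w i))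
       = ([K+1+a], {0, K + 1 + a} \<union> {K+1..<K+1+a} \<union> {K+1<..K+1+a}, q + w (n-1) + (\<Sum>i=K+1..<K+1+a. w i) + (\<Sum>i=K+1..<K+1+a. w i))"
      using walkR[of "K+1" a n w q] na nK by simp
    have "Suc (K+1+a) = n" using na n0 by linarith
    hence rl: "right_nb n (K+1+a) = 0" by (simp add: right_nb_def)
    have s4: "fold (step n w q) [Go 0 True] ([K+1+a], {0, K + 1 + a} \<union> {K+1..<K+1+a} \<union> {K+1<..K+1+a}, q + w (n-1) + (\<Sum>i=K+1..<K+1+a. w i) + (\<Sum>i=K+1..<K+1+a. w i))
       = ([0], {0, K + 1 + a} \<union> {K+1..<K+1+a} \<union> {K+1<..K+1+a}, q + w (n-1) + (\<Sum>i=K+1..<K+1+a. w i) + (\<Sum>i=K+1..<K+1+a. w i) + w (n - 1))"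
      using rl na by (auto simp: step_simps)
    have s5: "fold (step n w q) (replicate K (Go 0 True)) ([0], {0, K + 1 + a} \<union> {K+1..<K+1+a} \<union> {K+1<..K+1+a}, q + w (n-1) + (\<Sum>i=K+1..<K+1+a. w i) + (\<Sum>i=K+1..<K+1+a. w i) + w (n - 1))
       = ([K], {0, K + 1 + a} \<union> {K+1..<K+1+a} \<union> {K+1<..K+1+a} \<union> {0<..K}, q + w (n-1) + (\<Sum>i=K+1..<K+1+a. w i) + (\<Sum>i=K+1..<K+1+a. w i) + w (n - 1) + (\<Sum>i=0..<K. w i))"
      using walkR[of 0 K n w q] nK by simp
    have run: "run_moves n w q ms = ([K], {0, K + 1 + a} \<union> {K+1..<K+1+a} \<union> {K+1<..K+1+a} \<union> {0<..K}, q + w (n-1) + (\<Sum>i=K+1..<K+1+a. w i) + (\<Sum>i=K+1..<K+1+a. w i) + w (n - 1) + (\<Sum>i=0..<K. w i))"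
      unfolding run_moves_def ms_def fold_append comp_def s1 s2 s3 s4 s5 by simp
    have expl: "explored n (run_moves n w q ms)" unfolding run explored_def using na by auto
    have "\<not> n - 1 < K" "n - 1 \<noteq> K" "n - L - 1 \<le> n - 1" using LK nK by linarith+
    hence wn1: "w (n-1) = e" by (simp add: w_def)
    have sK: "(\<Sum>i=0..<K. w i) = real K * e" by (simp add: w_def)
    have sm: "(\<Sum>i=K+1..<K+1+a. w i) \<le> e * real L + e"
    proof -
      have "(\<Sum>i=K+1..<K+1+a. w i) \<le> e * card {i\<in>{K+1..<K+1+a}. n - L - 1 \<le> i} + d * card {K+1..<K+1+a}"
        by (rule sum_if_bound) (use e0 d0 in \<open>auto simp: w_def\<close>)
      moreover have "{i\<in>{K+1..<K+1+a}. n - L - 1 \<le> i} = {n-L-1..<n-1}" using na LK nK by auto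
      moreover have "d * card {K+1..<K+1+a} \<le> d * real n" using d0 na by simp
      ultimately show ?thesis using dn LK nK by simp
    qed
    have ob: "q \<le> opt_cost n w q \<and> opt_cost n w q \<le> q + e * real (2*L + K + 4)"
      using opt_bounds[OF ring q0 expl] run sm wn1 sK by (simp add: cost_of_def algebra_simps)
    have key: "2 * online_cost S n w q \<ge> 3 * opt_cost n w q - 15 * e"
    proof -
      have c2: "real (2*L + K - 1) = 2 * real L + real K - 1" using K2 by simp
      have "2 * (c + e + real (K + L + 1) * e) \<ge> 3 * (q + e * real (2*L + K + 4)) - 15 * e"
        using cb eK unfolding c2 by (simp add: algebra_simps)
      moreover have lin: "\<And>A B Z X D::real. 3*X - D \<le> 2*A \<Longrightarrow> A \<le> B \<Longrightarrow> Z \<le> X \<Longrightarrow> 3*Z - D \<le> 2*B"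
        by linarith
      ultimately show ?thesis using lin on ob[THEN conjunct2] by blast
    qed
    have "ratio S n w q \<ge> ereal (3/2 - 15 * e / (2*q))"
      by (rule ratio_ge[OF True q0]) (use ob key e0 in auto)
    thus ?thesis using ring by auto
  qed
qed

end



context cs begin

lemma caseC:
  assumes st0: "stt S n (\<lambda>_. e) q T0 = ([n-(K-1)], ES n R (K-1), c)" and RK: "R < K"
    and cb: "c \<ge> q + e * real (K - 1 + 2*R)"
    and mv: "S (snd (exec S n (\<lambda>_. e) q T0)) = Go 0 False"
  shows "\<exists>w. is_ring n w \<and> ratio S n w q \<ge> ereal (3/2 - 15 * e / (2*q))"
proof -
  define w where "w = (\<lambda>i. if i \<le> R then e else if i = n - K - 1 then H else if n - K \<le> i then e else d)"
  have ring: "is_ring n w" using nK K2 e0 d0 q0 H by (auto simp: is_ring_def w_def)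
  have wE: "w i = e" if "i \<le> R \<or> (R < i \<and> i \<noteq> n - K - 1 \<and> n - K \<le> i)" for i
    using that by (auto simp: w_def)
  have agree: "\<forall>v\<in>fst (snd (stt S n (\<lambda>_. e) q T0)). e = w v \<and> e = w (left_nb n v)"
  proof
    fix v assume "v \<in> fst (snd (stt S n (\<lambda>_. e) q T0))"
    hence v: "v \<le> R \<or> (n - (K - 1) \<le> v \<and> v < n)" using st0 by (auto simp: ES_def)
    have "left_nb n v \<le> R \<or> (R < left_nb n v \<and> left_nb n v \<noteq> n - K - 1 \<and> n - K \<le> left_nb n v)"
    proof (cases "v = 0")
      case True
      have "R < n - 1 \<and> n - 1 \<noteq> n - K - 1 \<and> n - K \<le> n - 1" using RK nK K2 by linarith
      thus ?thesis using True n0 by (simp add: lnb_0)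
    next
      case False
      then obtain v' where vv: "v = Suc v'" by (cases v) auto
      moreover have "Suc v' < n" using v RK nK vv by linarith
      moreover have "v' \<le> R \<or> (R < v' \<and> v' \<noteq> n - K - 1 \<and> n - K \<le> v')" using v vv RK nK K2 by linarith
      ultimately show ?thesis by (simp add: lnb)
    qed
    moreover have "v \<le> R \<or> (R < v \<and> v \<noteq> n - K - 1 \<and> n - K \<le> v)" using v RK nK K2 by linarith
    ultimately show "e = w v \<and> e = w (left_nb n v)" using wE by metis
  qed
  have nK1: "n - (K - 1) = Suc (n - K)" using K2 nK by linarith
  have lK: "left_nb n (n - (K - 1)) = n - K" unfolding nK1 using lnb[of "n - K" n] nK K2 by linarith
  have wnK: "w (n - K) = e" using RK nK K2 by (intro wE) linarith
  have stT: "stt S n w q (Suc T0) = ([n - K], insert (n - K) (ES n R (K-1)), c + e)"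
    using switch_Suc[OF n0 agree] st0 mv lK wnK by (simp add: step_simps)
  define y where "y = Suc R"
  define f where "f = (\<lambda>v. if v \<le> R then real (R + 1 - v) * e else if n - K \<le> v then real (n - v + R + 1) * e else 0)"
  have "\<not> y \<le> R" "\<not> n - K \<le> y" using RK nK unfolding y_def by linarith+
  hence fy: "f y = 0" by (simp add: f_def)
  have lip: "\<forall>v<n. \<bar>f v - f (right_nb n v)\<bar> \<le> w v"
  proof (intro allI impI)
    fix v assume vn: "v < n"
    consider "v < R" | "v = R" | "R < v" "Suc v < n - K" | "Suc v = n - K" | "n - K \<le> v" "Suc v < n" | "Suc v = n"
      using vn RK nK by linarith
    thus "\<bar>f v - f (right_nb n v)\<bar> \<le> w v"
    proof cases
      case 1
      hence "right_nb n v = Suc v" using nK RK by (simp add: rnb)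
      moreover have "real (R + 1 - v) = real (R + 1 - Suc v) + 1" using 1 by linarith
      ultimately show ?thesis using 1 e0 by (simp add: f_def w_def algebra_simps)
    next
      case 2
      hence r: "right_nb n v = Suc R" using nK RK by (simp add: rnb)
      have "\<not> n - K \<le> Suc R" using RK nK by linarith
      thus ?thesis using 2 r e0 by (simp add: f_def w_def)
    next
      case 3
      hence "right_nb n v = Suc v" by (simp add: rnb)
      moreover have "\<not> n - K \<le> Suc v" "\<not> n - K \<le> v" "v \<noteq> n - K - 1" using 3 by linarith+
      ultimately show ?thesis using 3 d0 by (simp add: f_def w_def)
    next
      case 4
      have "Suc v < n" using 4 nK K2 by linarith
      hence r: "right_nb n v = n - K" using 4 by (simp add: rnb)
      have "R < v" "\<not> n - K \<le> v" "v = n - K - 1" using 4 RK nK by linarith+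
      moreover have "real (n - (n - K) + R + 1) * e \<le> 2 * q"
      proof -
        have "n - (n - K) = K" using nK by simp
        hence "real (n - (n - K) + R + 1) * e \<le> real (2*K) * e" using RK e0 by (intro mult_right_mono) auto
        thus ?thesis using Kq by (simp add: algebra_simps)
      qed
      moreover have "\<not> n - K \<le> R" using RK nK by linarith
      ultimately show ?thesis using r e0 H by (simp add: f_def w_def)
    next
      case 5
      hence "right_nb n v = Suc v" by (simp add: rnb)
      moreover have "real (n - v + R + 1) = real (n - Suc v + R + 1) + 1" using 5 by linarith
      moreover have "R < v" "v \<noteq> n - K - 1" using 5 RK nK by linarith+
      ultimately show ?thesis using 5 e0 by (simp add: f_def w_def algebra_simps)
    next
      case 6
      hence "right_nb n v = 0" using n0 by (simp add: right_nb_def)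
      moreover have "R < v" "v \<noteq> n - K - 1" "n - K \<le> v" "n - v = 1" using 6 RK nK K2 by linarith+
      moreover have "f v = (real R + 2) * e" using calculation by (simp add: f_def)
      moreover have "f 0 = (real R + 1) * e" by (simp add: f_def)
      moreover have "w v = e" using calculation by (simp add: w_def)
      ultimately show ?thesis using e0 by (simp add: algebra_simps)
    qed
  qed
  show ?thesis
  proof (cases "online_explores S n w q")
    case False thus ?thesis using ring by (intro exI[of _ w]) (simp add: ratio_def)
  next
    case True
    have yn: "y \<notin> fst (snd (stt S n w q (Suc T0)))" using stT RK nK by (auto simp: ES_def y_def)
    have yl: "y < n" using nK RK by (simp add: y_def)
    have on0: "snd (snd (stt S n w q (Suc T0))) + Psi q f y (stt S n w q (Suc T0)) \<le> online_cost S n w q"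
      by (rule online_lb[OF n0 _ lip fy yl yn True]) (use q0 in simp)
    have "Psi q f y (stt S n w q (Suc T0)) = min (q + f 0) (f (n - K))"
      using yn stT by (simp add: Psi_def)
    also have "\<dots> = real (K + R + 1) * e"
    proof -
      have "\<not> n - K \<le> R" "n - (n - K) = K" using RK nK by linarith+
      thus ?thesis using Kq e0 by (simp add: f_def algebra_simps)
    qed
    finally have on: "c + e + real (K + R + 1) * e \<le> online_cost S n w q" using on0 stT by simp
    define a where "a = n - K - 1"
    have an: "a < n" "Suc a = n - K" using nK by (simp_all add: a_def)
    have n1: "n - 1 = (n - K) + (K - 1)" using nK K2 by simp
    define ms where "ms = [Invoke] @ replicate a (Go 0 True) @ replicate a (Go 0 False)
       @ [Go 0 False] @ replicate (K-1) (Go 0 False)"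
    define E4 where "E4 = {0} \<union> {0<..a} \<union> {0..<a}"
    define c4 where "c4 = q + (\<Sum>i=0..<a. w i) + (\<Sum>i=0..<a. w i)"
    have s1: "fold (step n w q) [Invoke] init_state = ([0], {0}, q)"
      by (simp add: init_state_def step_simps)
    have s2: "fold (step n w q) (replicate a (Go 0 True)) ([0], {0}, q)
       = ([0 + a], {0} \<union> {0<..a}, q + (\<Sum>i=0..<a. w i))"
      using walkR[of 0 a n w q] an by simp
    have s3: "fold (step n w q) (replicate a (Go 0 False)) ([0 + a], {0} \<union> {0<..a}, q + (\<Sum>i=0..<a. w i))
       = ([0], E4, c4)"
      using walkL[of 0 a n w q] an by (simp add: E4_def c4_def)
    have s4: "fold (step n w q) [Go 0 False] ([0], E4, c4) = ([(n - K) + (K - 1)], insert (n-1) E4, c4 + w (n - 1))"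
    proof -
      have l0: "left_nb n 0 = (n - K) + (K - 1)" by (simp only: lnb_0[OF n0] n1)
      have eq: "n - K + (K - Suc 0) = n - Suc 0" using nK K2 by linarith
      show ?thesis by (simp add: step_simps l0 eq)
    qed
    have s5: "fold (step n w q) (replicate (K-1) (Go 0 False)) ([(n - K) + (K - 1)], insert (n-1) E4, c4 + w (n - 1))
       = ([n - K], insert (n-1) E4 \<union> {n-K..<(n-K)+(K-1)}, c4 + w (n - 1) + (\<Sum>i=n-K..<(n-K)+(K-1). w i))"
    proof -
      have p: "(n - K) + (K - 1) < n" using nK K2 by linarith
      show ?thesis by (rule walkL[OF p])
    qed
    have run: "run_moves n w q ms = ([n - K], insert (n-1) E4 \<union> {n-K..<(n-K)+(K-1)}, c4 + w (n - 1) + (\<Sum>i=n-K..<(n-K)+(K-1). w i))"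
      unfolding run_moves_def ms_def fold_append comp_def s1 s2 s3 s4 s5 by simp
    have expl: "explored n (run_moves n w q ms)"
    proof -
      have "{..<n} \<subseteq> insert (n-1) E4 \<union> {n-K..<(n-K)+(K-1)}"
      proof
        fix i assume "i \<in> {..<n}"
        hence "i \<le> a \<or> i = n - 1 \<or> (n - K \<le> i \<and> i < (n-K)+(K-1))" using an nK K2 by auto
        thus "i \<in> insert (n-1) E4 \<union> {n-K..<(n-K)+(K-1)}" by (auto simp: E4_def)
      qed
      thus ?thesis unfolding run explored_def by simp
    qed
    have wn1: "w (n-1) = e" using RK nK K2 by (intro wE) linarith
    have sK: "(\<Sum>i=n-K..<(n-K)+(K-1). w i) = real (K - 1) * e"
    proof -
      have "(\<Sum>i=n-K..<(n-K)+(K-1). w i) = (\<Sum>i=n-K..<(n-K)+(K-1). e)"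
        by (rule sum.cong) (use RK nK in \<open>auto intro!: wE\<close>)
      thus ?thesis by simp
    qed
    have sm: "(\<Sum>i=0..<a. w i) \<le> e * real (R + 1) + e"
    proof -
      have "(\<Sum>i=0..<a. w i) \<le> e * card {i\<in>{0..<a}. i \<le> R} + d * card {0..<a}"
        by (rule sum_if_bound) (use e0 d0 an in \<open>auto simp: w_def\<close>)
      moreover have "{i\<in>{0..<a}. i \<le> R} = {0..R}" using an RK nK by auto
      moreover have "d * card {0..<a} \<le> d * real n" using d0 an by simp
      ultimately show ?thesis using dn by simp
    qed
    have ob: "q \<le> opt_cost n w q \<and> opt_cost n w q \<le> q + e * real (2*R + K + 4)"
    proof -
      have kk: "real (K - 1) = real K - 1" using K2 by simp
      show ?thesis using opt_bounds[OF ring q0 expl] run sm wn1 sK unfolding c4_def kk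
        by (simp add: cost_of_def algebra_simps)
    qed
    have key: "2 * online_cost S n w q \<ge> 3 * opt_cost n w q - 15 * e"
    proof -
      have c2: "real (K - 1 + 2*R) = real K - 1 + 2 * real R" using K2 by simp
      have "2 * (c + e + real (K + R + 1) * e) \<ge> 3 * (q + e * real (2*R + K + 4)) - 15 * e"
        using cb eK unfolding c2 by (simp add: algebra_simps)
      moreover have lin: "\<And>A B Z X D::real. 3*X - D \<le> 2*A \<Longrightarrow> A \<le> B \<Longrightarrow> Z \<le> X \<Longrightarrow> 3*Z - D \<le> 2*B"
        by linarith
      ultimately show ?thesis using lin on ob[THEN conjunct2] by blast
    qed
    have "ratio S n w q \<ge> ereal (3/2 - 15 * e / (2*q))"
      by (rule ratio_ge[OF True q0]) (use ob key e0 in auto)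
    thus ?thesis using ring by auto
  qed
qed

end



lemma exists_ring:
  fixes S :: strategy and q :: real and N :: nat
  assumes q0: "q > 0" and N7: "N \<ge> 7"
  shows "\<exists>n w. is_ring n w \<and> ratio S n w q \<ge> ereal (3/2 - 8 / real N)"
proof -
  define e where "e = q / real N"
  define K where "K = N - 5"
  define n where "n = 2*K + 2"
  define d where "d = e / real n"
  define H where "H = 2*q"
  have Npos: "real N > 0" using N7 by simp
  have e0: "e > 0" using q0 Npos by (simp add: e_def)
  have KN: "K + 5 = N" using N7 by (simp add: K_def)
  interpret cs n K q e S d H
  proof
    show "2 \<le> K" using N7 by (simp add: K_def)
    show "2*K+2 \<le> n" by (simp add: n_def)
    show "e > 0" by (rule e0)
    show "q > 0" by (rule q0)
    show "e * real (K + 5) = q" using KN Npos by (simp add: e_def)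
    show "d * real n = e" by (simp add: d_def n_def)
    show "d > 0" using e0 by (simp add: d_def n_def)
    show "H = 2*q" by (simp add: H_def)
  qed
  have eq: "15 * e / (2*q) \<le> 8 / real N"
    using q0 Npos by (simp add: e_def field_simps)
  let ?wB = "\<lambda>_::nat. e"
  have ringB: "is_ring n ?wB" using e0 K2 nK by (simp add: is_ring_def)
  show ?thesis
  proof (cases "\<forall>t. phase n K q e (stt S n ?wB q t)")
    case True
    have "\<not> online_explores S n ?wB q"
    proof
      assume "online_explores S n ?wB q"
      then obtain t where "explored n (stt S n ?wB q t)" by (auto simp: online_explores_def)
      hence "K \<in> fst (snd (stt S n ?wB q t))" using nK by (auto simp: explored_def)
      thus False using phase_notK True by blast
    qed
    thus ?thesis using ringB by (intro exI[of _ n] exI[of _ ?wB]) (simp add: ratio_def)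
  next
    case False
    define T where "T = (LEAST t. \<not> phase n K q e (stt S n ?wB q t))"
    have nT: "\<not> phase n K q e (stt S n ?wB q T)" using False unfolding T_def by (metis (mono_tags) LeastI)
    have "phase n K q e (stt S n ?wB q 0)" by (simp add: init_state_def phase_def)
    hence "T \<noteq> 0" using nT by metis
    then obtain T0 where T: "T = Suc T0" by (cases T) auto
    have pT0: "phase n K q e (stt S n ?wB q T0)"
      using not_less_Least[of T0 "\<lambda>t. \<not> phase n K q e (stt S n ?wB q t)"] T unfolding T_def by auto
    define m where "m = S (snd (exec S n ?wB q T0))"
    have "\<not> phase n K q e (step n ?wB q m (stt S n ?wB q T0))" using nT T by (simp add: stt_Suc m_def)
    hence cases: "(m = Invoke \<and> fst (stt S n ?wB q T0) \<noteq> []) \<or> (m = Go 0 True \<and> trigB n K q e (stt S n ?wB q T0))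
       \<or> (m = Go 0 False \<and> trigC n K q e (stt S n ?wB q T0))"
      using phase_step[OF pT0, of m] by blast
    show ?thesis
    proof -
      { assume a: "m = Invoke" "fst (stt S n ?wB q T0) \<noteq> []"
        then obtain p R L c where st: "stt S n ?wB q T0 = ([p], ES n R L, c)" and RL: "R < K" "L < K" and
          side: "(p \<le> R \<and> c \<ge> q + e * real (2*L + 2*R - p)) \<or>
            (n - L \<le> p \<and> p < n \<and> c \<ge> q + e * real (2*L + 2*R - (n - p)))"
          using pT0 unfolding phase_def by auto
        from caseA[OF st RL side] a obtain w where "is_ring n w" "ratio S n w q \<ge> ereal (3/2)"
          by (auto simp: m_def)
        moreover have "ereal (3/2 - 8 / real N) \<le> ereal (3/2)" using Npos by simp
        ultimately have ?thesis by (meson order.trans) }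
      moreover
      { assume a: "m = Go 0 True" "trigB n K q e (stt S n ?wB q T0)"
        then obtain L c where st: "stt S n ?wB q T0 = ([K-1], ES n (K-1) L, c)" and "L < K"
          and "c \<ge> q + e * real (2*L + K - 1)" unfolding trigB_def by auto
        from caseB[OF this] a obtain w where "is_ring n w" "ratio S n w q \<ge> ereal (3/2 - 15 * e / (2*q))"
          by (auto simp: m_def)
        moreover have "ereal (3/2 - 8 / real N) \<le> ereal (3/2 - 15 * e / (2*q))" using eq by simp
        ultimately have ?thesis by (meson order.trans) }
      moreover
      { assume a: "m = Go 0 False" "trigC n K q e (stt S n ?wB q T0)"
        then obtain R c where st: "stt S n ?wB q T0 = ([n-(K-1)], ES n R (K-1), c)" and "R < K"
          and "c \<ge> q + e * real (K - 1 + 2*R)" using a(2) unfolding trigC_def by blast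
        from caseC[OF this] a obtain w where "is_ring n w" "ratio S n w q \<ge> ereal (3/2 - 15 * e / (2*q))"
          by (auto simp: m_def)
        moreover have "ereal (3/2 - 8 / real N) \<le> ereal (3/2 - 15 * e / (2*q))" using eq by simp
        ultimately have ?thesis by (meson order.trans) }
      ultimately show ?thesis using cases by blast
    qed
  qed
qed

theorem theorem1:
  fixes q :: real and S :: strategy
  assumes "q > 0"
  shows "competitive_ratio S q \<ge> ereal (3/2)"
proof (rule ereal_le_epsilon2)
  fix eps :: real assume eps: "0 < eps"
  obtain N :: nat where N: "N \<ge> 7" "8 / real N < eps"
  proof -
    obtain M :: nat where M: "real M > 8 / eps" using reals_Archimedean2 by blast
    define N where "N = max M 7"
    have "real N \<ge> real M" by (simp add: N_def)
    hence "real N > 8 / eps" using M by linarith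
    hence "8 / real N < eps" using eps
      by (smt (verit, ccfv_SIG) divide_less_eq less_divide_eq mult.commute of_nat_0_le_iff)
    moreover have "N \<ge> 7" by (simp add: N_def)
    ultimately show ?thesis using that by blast
  qed
  obtain n w where r: "is_ring n w" and rat: "ratio S n w q \<ge> ereal (3/2 - 8 / real N)"
    using exists_ring[OF assms N(1)] by blast
  have "ratio S n w q \<le> competitive_ratio S q"
    unfolding competitive_ratio_def using r by (intro SUP_upper2[of "(n,w)"]) auto
  hence "ereal (3/2 - 8 / real N) \<le> competitive_ratio S q" using rat by (meson order.trans)
  hence "ereal (3/2 - 8 / real N) + ereal eps \<le> competitive_ratio S q + ereal eps" by (rule add_right_mono)
  moreover have "ereal (3/2) \<le> ereal (3/2 - 8 / real N) + ereal eps" using N by simp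
  ultimately show "ereal (3/2) \<le> competitive_ratio S q + ereal eps" by (meson order.trans)
qed



end
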